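(* Let $f:\mathbb{T}\to\mathbb{R}$ be a real analytic function that is not a trigonometric polynomial, with Fourier expansion $f(x)=\sum_{k\in\mathbb{Z}}a_ke^{2\pi ikx}$, and for $n\ge1$ put $T_n=\sum_{j\ge2}|a_{jn}|\,|jn|$. Then there exists a subsequence $(a_{l_k})_{k\ge1}$ of the Fourier coefficients (with $l_k$ a strictly increasing sequence of positive integers) such that $\left|\frac{a_{l_k}}{T_{l_k}}\right|\to\infty$ as $k\to\infty$.
   Context: $\mathbb{T}=\mathbb{R}/\mathbb{Z}$. *)

theory Defs
  imports "HOL-Analysis.Analysis"
begin

text \<open>Functions on the circle T = R/Z are represented as 1-periodic functions on R.\<close>
definition periodic1 :: "(real \<Rightarrow> real) \<Rightarrow> bool" where
  "periodic1 f \<longleftrightarrow> (\<forall>x. f (x + 1) = f x)"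

definition real_analytic :: "(real \<Rightarrow> real) \<Rightarrow> bool" where
  "real_analytic f \<longleftrightarrow>
     (\<forall>x. \<exists>r>0. \<exists>c :: nat \<Rightarrow> real.
        \<forall>y. \<bar>y - x\<bar> < r \<longrightarrow> (\<lambda>n. c n * (y - x) ^ n) sums f y)"

definition fourier_coeff :: "(real \<Rightarrow> real) \<Rightarrow> int \<Rightarrow> complex" where
  "fourier_coeff f k =
     integral {0..1} (\<lambda>x. complex_of_real (f x) * cis (- 2 * pi * real_of_int k * x))"

definition trig_poly :: "(real \<Rightarrow> real) \<Rightarrow> bool" where
  "trig_poly f \<longleftrightarrow>
     (\<exists>N::nat. \<exists>c :: int \<Rightarrow> complex. \<forall>x.
        complex_of_real (f x) = (\<Sum>k\<in>{-int N..int N}. c k * cis (2 * pi * real_of_int k * x)))"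

definition T_sum :: "(real \<Rightarrow> real) \<Rightarrow> nat \<Rightarrow> real" where
  "T_sum f n = (\<Sum>j. norm (fourier_coeff f (int ((j + 2) * n))) * real ((j + 2) * n))"

end

theory Submission
  imports Defs "HOL-Complex_Analysis.Complex_Analysis"
begin


lemma T_bound:
  fixes a :: "nat \<Rightarrow> real"
  assumes a0: "\<And>k. 0 \<le> a k" and ak: "\<And>k. k \<ge> n \<Longrightarrow> a k \<le> A * \<rho>^k"
    and rho: "0 < \<rho>" and small: "2 * \<rho>^n \<le> 1/2" and n1: "n \<ge> 1"
  shows "summable (\<lambda>j. a ((j+2)*n) * real ((j+2)*n))"
    and "(\<Sum>j. a ((j+2)*n) * real ((j+2)*n)) \<le> 4 * A * real n * \<rho>^(2*n)"
proof -
  define x where "x = 2 * \<rho>^n"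
  have x0: "0 \<le> x" "x \<le> 1/2" using rho small by (auto simp: x_def)
  have A0: "0 \<le> A"
  proof -
    have "0 \<le> a n" by (rule a0)
    also have "\<dots> \<le> A * \<rho>^n" using ak by simp
    finally show ?thesis using rho by (simp add: zero_le_mult_iff) (smt (verit) rho zero_less_power)
  qed
  have le2: "real (j+2) \<le> 2^(j+1)" for j :: nat
  proof (induction j)
    case (Suc j) then show ?case by simp
  qed simp
  have bnd: "a ((j+2)*n) * real ((j+2)*n) \<le> (A * real n * \<rho>^n) * x^(j+1)" for j
  proof -
    have "a ((j+2)*n) \<le> A * \<rho>^((j+2)*n)" using ak n1 by simp
    also have "\<rho>^((j+2)*n) = \<rho>^n * (\<rho>^n)^(j+1)"
      by (simp add: power_mult[symmetric] power_add[symmetric] algebra_simps)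
    finally have 1: "a ((j+2)*n) \<le> A * (\<rho>^n * (\<rho>^n)^(j+1))" .
    have "a ((j+2)*n) * real ((j+2)*n) \<le> A * (\<rho>^n * (\<rho>^n)^(j+1)) * (real (j+2) * real n)"
      by (rule mult_mono) (use 1 A0 rho a0 in \<open>auto simp: algebra_simps\<close>)
    also have "\<dots> \<le> A * (\<rho>^n * (\<rho>^n)^(j+1)) * (2^(j+1) * real n)"
      by (intro mult_left_mono mult_right_mono le2) (use A0 rho in auto)
    also have "\<dots> = (A * real n * \<rho>^n) * x^(j+1)"
      by (simp add: x_def power_mult_distrib)
    finally show ?thesis .
  qed
  have sg: "summable (\<lambda>j. (A * real n * \<rho>^n) * x^(j+1))"
    using x0 by (intro summable_mult) (simp add: summable_geometric)
  show sm: "summable (\<lambda>j. a ((j+2)*n) * real ((j+2)*n))"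
    by (rule summable_comparison_test'[OF sg]) (use bnd a0 in auto)
  have "(\<Sum>j. a ((j+2)*n) * real ((j+2)*n)) \<le> (\<Sum>j. (A * real n * \<rho>^n) * x^(j+1))"
    by (rule suminf_le[OF _ sm sg]) (use bnd in auto)
  also have "\<dots> = (A * real n * \<rho>^n) * (x * (1 / (1 - x)))"
  proof -
    have "(\<lambda>j. x^(j+1)) sums (x * (1 / (1 - x)))"
      using sums_mult[OF geometric_sums[of x], of x] x0 by (simp add: power_Suc)
    then show ?thesis using sums_mult sums_unique by (metis (no_types))
  qed
  also have "\<dots> \<le> (A * real n * \<rho>^n) * (2 * x)"
  proof (rule mult_left_mono)
    have "1 / (1 - x) \<le> 2" using x0 by (simp add: field_simps)
    then show "x * (1 / (1 - x)) \<le> 2 * x" using x0 mult_left_mono by (metis mult.commute)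
    show "0 \<le> A * real n * \<rho>^n" using A0 rho by simp
  qed
  also have "\<dots> = 4 * A * real n * \<rho>^(2*n)" by (simp add: x_def power_mult power2_eq_square power_mult_distrib)
  finally show "(\<Sum>j. a ((j+2)*n) * real ((j+2)*n)) \<le> 4 * A * real n * \<rho>^(2*n)" .
qed

lemma exists_good:
  fixes a :: "nat \<Rightarrow> real"
  assumes a0: "\<And>k. 0 \<le> a k" and dec: "\<And>k. a k \<le> C * q^k" and q: "0 < q" "q < 1"
    and nz: "\<And>N. \<exists>k>N. a k \<noteq> 0"
    and Tdef: "\<And>n. T n = (\<Sum>j. a ((j+2)*n) * real ((j+2)*n))"
  shows "\<exists>n\<ge>N. n > 0 \<and> M * T n < a n \<and> 0 \<le> T n"
proof -
  define \<rho> where "\<rho> = sqrt q"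
  have rho: "0 < \<rho>" "\<rho> < 1" using q by (auto simp: \<rho>_def real_sqrt_lt_1_iff)
  have qr: "q = \<rho>^2" using q by (simp add: \<rho>_def)
  define M' where "M' = max M 0"
  have lim1: "(\<lambda>n. \<rho>^n) \<longlonglongrightarrow> 0" using rho by (intro LIMSEQ_power_zero) auto
  have lim2: "(\<lambda>n. real n * \<rho>^n) \<longlonglongrightarrow> 0"
    using powser_times_n_limit_0[of \<rho>] rho by simp
  have ev1: "eventually (\<lambda>n. 2 * \<rho>^n \<le> 1/2) sequentially"
  proof -
    have "eventually (\<lambda>n. \<rho>^n < 1/4) sequentially" by (rule order_tendstoD(2)[OF lim1]) simp
    then show ?thesis by (rule eventually_mono) simp
  qed
  have ev2: "eventually (\<lambda>n. 4 * M' * (real n * \<rho>^n) < 1) sequentially"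
  proof -
    have "(\<lambda>n. 4 * M' * (real n * \<rho>^n)) \<longlonglongrightarrow> 4 * M' * 0"
      by (intro tendsto_mult tendsto_const lim2)
    then have "(\<lambda>n. 4 * M' * (real n * \<rho>^n)) \<longlonglongrightarrow> 0" by simp
    then show ?thesis by (rule order_tendstoD(2)) simp
  qed
  obtain N1 where N1: "\<And>n. n \<ge> N1 \<Longrightarrow> 2 * \<rho>^n \<le> 1/2 \<and> 4 * M' * (real n * \<rho>^n) < 1"
    using eventually_conj[OF ev1 ev2] unfolding eventually_sequentially by blast
  define N' where "N' = max (max N 1) N1"
  define b where "b k = a k / \<rho>^k" for k
  have bC: "b k \<le> C * \<rho>^k" for k
  proof -
    have "a k \<le> C * (\<rho>^k * \<rho>^k)" using dec[of k] by (simp add: qr power_mult[symmetric] power2_eq_square power_mult_distrib)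
    then show ?thesis using rho by (simp add: b_def field_simps)
  qed
  obtain k0 where k0: "k0 > N'" "a k0 \<noteq> 0" using nz by blast
  define v where "v = b k0"
  have v0: "v > 0" using k0 a0[of k0] rho by (simp add: v_def b_def)
  have "(\<lambda>k. C * \<rho>^k) \<longlonglongrightarrow> C * 0" by (intro tendsto_mult tendsto_const lim1)
  then have "eventually (\<lambda>k. C * \<rho>^k < v) sequentially" using order_tendstoD(2) v0 by force
  then obtain K where K: "\<And>k. k \<ge> K \<Longrightarrow> C * \<rho>^k < v" unfolding eventually_sequentially by blast
  define S where "S = {N'..max K k0}"
  have Sfin: "finite S" and Sne: "S \<noteq> {}" using k0 by (auto simp: S_def)
  have "Max (b ` S) \<in> b ` S" by (rule Max_in) (use Sfin Sne in auto)
  then obtain n where nS: "n \<in> S" and nM: "b n = Max (b ` S)" by auto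
  have nmax: "b k \<le> b n" if "k \<in> S" for k
    unfolding nM by (rule Max_ge) (use Sfin that in auto)
  have k0S: "k0 \<in> S" using k0 by (auto simp: S_def)
  have bmax: "b k \<le> b n" if "k \<ge> N'" for k
  proof (cases "k \<le> max K k0")
    case True then show ?thesis using nmax that by (auto simp: S_def)
  next
    case False
    then have "b k < v" using K[of k] bC[of k] by force
    also have "v \<le> b n" using nmax[OF k0S] by (simp add: v_def)
    finally show ?thesis by simp
  qed
  have nN: "n \<ge> N'" using nS by (auto simp: S_def)
  have bn: "b n \<ge> v" using nmax[OF k0S] by (simp add: v_def)
  have an: "a n = b n * \<rho>^n" using rho by (simp add: b_def)
  have apos: "a n > 0" using an bn v0 rho by simp
  have ak: "a k \<le> b n * \<rho>^k" if "k \<ge> n" for k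
  proof -
    have "a k = b k * \<rho>^k" using rho by (simp add: b_def)
    also have "\<dots> \<le> b n * \<rho>^k" using bmax[of k] that nN rho by (intro mult_right_mono) auto
    finally show ?thesis .
  qed
  have n1: "n \<ge> 1" "n \<ge> N" "n \<ge> N1" using nN by (auto simp: N'_def)
  note TB = T_bound[of a n "b n" \<rho>, OF a0 ak rho(1) _ n1(1)]
  have sm: "summable (\<lambda>j. a ((j+2)*n) * real ((j+2)*n))" and
    Tle: "T n \<le> 4 * b n * real n * \<rho>^(2*n)"
    using TB N1[OF n1(3)] Tdef by auto
  have T0: "0 \<le> T n" unfolding Tdef by (intro suminf_nonneg sm) (use a0 in auto)
  have "M * T n \<le> M' * T n" using T0 by (intro mult_right_mono) (auto simp: M'_def)
  also have "\<dots> \<le> M' * (4 * b n * real n * \<rho>^(2*n))" using Tle by (intro mult_left_mono) (auto simp: M'_def)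
  also have "\<dots> = (4 * M' * (real n * \<rho>^n)) * a n" by (simp add: an power_mult power2_eq_square power_mult_distrib)
  also have "\<dots> < 1 * a n" using N1[OF n1(3)] apos by (intro mult_strict_right_mono) auto
  finally show ?thesis using n1 T0 by auto
qed

lemma build_seq:
  fixes a T :: "nat \<Rightarrow> real"
  assumes H: "\<And>M N. \<exists>n\<ge>N. n > 0 \<and> M * T n < a n \<and> 0 \<le> T n"
  shows "\<exists>l :: nat \<Rightarrow> nat. strict_mono l \<and> (\<forall>k. l k > 0) \<and>
           (\<forall>M::real. eventually (\<lambda>k. M * T (l k) < a (l k)) sequentially)"
proof -
  define g where "g M N = (SOME n. n \<ge> N \<and> n > 0 \<and> M * T n < a n \<and> 0 \<le> T n)" for M N
  have g: "g M N \<ge> N \<and> g M N > 0 \<and> M * T (g M N) < a (g M N) \<and> 0 \<le> T (g M N)" for M N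
    unfolding g_def by (rule someI_ex) (use H in blast)
  define l where "l = rec_nat (g 0 1) (\<lambda>k lk. g (real (Suc k)) (Suc lk))"
  have l0: "l 0 = g 0 1" and lS: "l (Suc k) = g (real (Suc k)) (Suc (l k))" for k
    by (simp_all add: l_def)
  have P: "real k * T (l k) < a (l k) \<and> 0 \<le> T (l k) \<and> l k > 0" for k
  proof (cases k)
    case 0 then show ?thesis using g[where M=0 and N=1] by (simp add: l0)
  next
    case (Suc m) then show ?thesis using g[where M="real (Suc m)" and N="Suc (l m)"] by (simp add: lS)
  qed
  have "strict_mono l" unfolding strict_mono_Suc_iff
  proof
    fix k
    have "g (real (Suc k)) (Suc (l k)) \<ge> Suc (l k)" using g by blast
    then show "l k < l (Suc k)" by (simp add: lS)
  qed
  moreover have "\<forall>M::real. eventually (\<lambda>k. M * T (l k) < a (l k)) sequentially"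
  proof
    fix M :: real
    show "eventually (\<lambda>k. M * T (l k) < a (l k)) sequentially"
      unfolding eventually_sequentially
    proof (intro exI allI impI)
      fix k assume "k \<ge> nat \<lceil>M\<rceil>"
      then have "M \<le> real k" by linarith
      then have "M * T (l k) \<le> real k * T (l k)" using P by (intro mult_right_mono) auto
      also have "\<dots> < a (l k)" using P by auto
      finally show "M * T (l k) < a (l k)" .
    qed
  qed
  ultimately show ?thesis using P by blast
qed



inductive_set tp :: "(real \<Rightarrow> complex) set" where
  tp_base: "(\<lambda>t. a * cis (2*pi*real_of_int m*t)) \<in> tp"
| tp_add: "p \<in> tp \<Longrightarrow> q \<in> tp \<Longrightarrow> (\<lambda>t. p t + q t) \<in> tp"

lemma tp_base_mult: "(\<lambda>t. p t * (b * cis (2*pi*real_of_int n*t))) \<in> tp" if "p \<in> tp"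
  using that
proof induction
  case (tp_base a m)
  have "(\<lambda>t. a * cis (2*pi*real_of_int m*t) * (b * cis (2*pi*real_of_int n*t))) =
        (\<lambda>t. (a*b) * cis (2*pi*real_of_int (m+n)*t))"
    by (auto simp: cis_mult algebra_simps)
  then show ?case by (simp only: tp.tp_base)
next
  case (tp_add p q)
  have "(\<lambda>t. (p t + q t) * (b * cis (2*pi*real_of_int n*t))) =
        (\<lambda>t. p t * (b * cis (2*pi*real_of_int n*t)) + q t * (b * cis (2*pi*real_of_int n*t)))"
    by (auto simp: algebra_simps)
  then show ?case using tp_add by (simp only: tp.tp_add)
qed

lemma tp_mult: assumes "p \<in> tp" "q \<in> tp" shows "(\<lambda>t. p t * q t) \<in> tp"
  using assms(2)
proof induction
  case (tp_base a m)
  then show ?case by (rule tp_base_mult[OF assms(1)])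
next
  case (tp_add q1 q2)
  have "(\<lambda>t. p t * (q1 t + q2 t)) = (\<lambda>t. p t * q1 t + p t * q2 t)" by (auto simp: algebra_simps)
  then show ?case using tp_add by (simp only: tp.tp_add)
qed

lemma tp_const: "(\<lambda>t. a) \<in> tp"
  using tp_base[of a 0] by simp

lemma tp_scale: "p \<in> tp \<Longrightarrow> (\<lambda>t. a * p t) \<in> tp"
  using tp_mult[OF tp_const] by blast

lemma tp_cos: "(\<lambda>t. complex_of_real (cos (2*pi*t))) \<in> tp"
proof -
  have "(\<lambda>t. complex_of_real (cos (2*pi*t))) =
        (\<lambda>t. (1/2) * cis (2*pi*real_of_int 1*t) + (1/2) * cis (2*pi*real_of_int (-1)*t))"
    by (auto simp: complex_eq_iff)
  then show ?thesis by (simp only: tp_base tp_add)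
qed

lemma tp_sin: "(\<lambda>t. complex_of_real (sin (2*pi*t))) \<in> tp"
proof -
  have "(\<lambda>t. complex_of_real (sin (2*pi*t))) =
        (\<lambda>t. (-\<i>/2) * cis (2*pi*real_of_int 1*t) + (\<i>/2) * cis (2*pi*real_of_int (-1)*t))"
    by (auto simp: complex_eq_iff)
  then show ?thesis by (simp only: tp_base tp_add)
qed

lemma tp_rpf:
  fixes q :: "complex \<Rightarrow> real"
  assumes "real_polynomial_function q"
  shows "(\<lambda>t. complex_of_real (q (cis (2*pi*t)))) \<in> tp"
  using assms
proof induction
  case (linear f)
  interpret f: bounded_linear f by fact
  have fz: "f z = Re z * f 1 + Im z * f \<i>" for z
  proof -
    have "z = Re z *\<^sub>R 1 + Im z *\<^sub>R \<i>" by (simp add: complex_eq_iff)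
    then have "f z = f (Re z *\<^sub>R 1 + Im z *\<^sub>R \<i>)" by (rule arg_cong)
    also have "\<dots> = Re z * f 1 + Im z * f \<i>" by (simp add: f.add f.scaleR)
    finally show ?thesis .
  qed
  have "(\<lambda>t. complex_of_real (f (cis (2*pi*t)))) =
      (\<lambda>t. of_real (f 1) * complex_of_real (cos (2*pi*t)) + of_real (f \<i>) * complex_of_real (sin (2*pi*t)))"
  proof (rule ext)
    fix t
    have "f (cis (2*pi*t)) = cos (2*pi*t) * f 1 + sin (2*pi*t) * f \<i>" using fz[of "cis (2*pi*t)"] by simp
    then show "complex_of_real (f (cis (2*pi*t))) =
      of_real (f 1) * complex_of_real (cos (2*pi*t)) + of_real (f \<i>) * complex_of_real (sin (2*pi*t))"
      by (simp add: mult.commute)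
  qed
  then show ?case by (simp only: tp_add tp_scale tp_cos tp_sin)
next
  case (const c)
  then show ?case by (rule tp_const)
next
  case (add f g)
  from tp_add[OF add.IH] show ?case by simp
next
  case (mult f g)
  from tp_mult[OF mult.IH] show ?case by simp
qed

lemma tp_poly:
  fixes p :: "complex \<Rightarrow> complex"
  assumes "polynomial_function p"
  shows "(\<lambda>t. p (cis (2*pi*t))) \<in> tp"
proof -
  have "real_polynomial_function (Re \<circ> p)" "real_polynomial_function (Im \<circ> p)"
    using assms bounded_linear_Re bounded_linear_Im unfolding polynomial_function_def by blast+
  then have "(\<lambda>t. complex_of_real ((Re \<circ> p) (cis (2*pi*t)))) \<in> tp"
            "(\<lambda>t. complex_of_real ((Im \<circ> p) (cis (2*pi*t)))) \<in> tp"
    by (simp_all only: tp_rpf)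
  then have "(\<lambda>t. complex_of_real ((Re \<circ> p) (cis (2*pi*t))) + \<i> * complex_of_real ((Im \<circ> p) (cis (2*pi*t)))) \<in> tp"
    by (intro tp_add tp_scale)
  moreover have "(\<lambda>t. complex_of_real ((Re \<circ> p) (cis (2*pi*t))) + \<i> * complex_of_real ((Im \<circ> p) (cis (2*pi*t))))
     = (\<lambda>t. p (cis (2*pi*t)))" by (auto simp: complex_eq_iff)
  ultimately show ?thesis by simp
qed

lemma tp_orth:
  fixes H :: "real \<Rightarrow> complex"
  assumes cont: "continuous_on {0..1} H"
    and orth: "\<And>m::int. integral {0..1} (\<lambda>t. H t * cis (2*pi*real_of_int m*t)) = 0"
    and q: "q \<in> tp"
  shows "continuous_on UNIV q \<and> integral {0..1} (\<lambda>t. H t * q t) = 0"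
  using q
proof induction
  case (tp_base a m)
  have "integral {0..1} (\<lambda>t. H t * (a * cis (2*pi*real_of_int m*t))) =
        integral {0..1} (\<lambda>t. H t * cis (2*pi*real_of_int m*t)) * a"
    by (simp add: integral_mult_left[symmetric] algebra_simps)
  then show ?case using orth by (auto intro!: continuous_intros)
next
  case (tp_add p q)
  have ip: "(\<lambda>t. H t * p t) integrable_on {0..1}" "(\<lambda>t. H t * q t) integrable_on {0..1}"
    using tp_add cont by (auto intro!: integrable_continuous_interval continuous_intros
        intro: continuous_on_subset)
  have "integral {0..1} (\<lambda>t. H t * (p t + q t)) =
        integral {0..1} (\<lambda>t. H t * p t) + integral {0..1} (\<lambda>t. H t * q t)"
    by (simp add: distrib_left integral_add[OF ip])
  then show ?case using tp_add by (auto intro!: continuous_intros)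
qed



lemma Arg_cis: assumes "0 \<le> t" "t < 1" shows "Arg2pi (cis (2*pi*t)) = 2*pi*t"
  by (rule Arg2pi_unique[of 1]) (use assms in \<open>auto simp: cis_conv_exp\<close>)

lemma cis_image: "(\<lambda>t. cis (2*pi*t)) ` {0..1} = sphere 0 1"
proof
  show "(\<lambda>t. cis (2*pi*t)) ` {0..1} \<subseteq> sphere 0 1" by auto
  show "sphere 0 1 \<subseteq> (\<lambda>t. cis (2*pi*t)) ` {0..1}"
  proof
    fix z :: complex assume "z \<in> sphere 0 1"
    then have z: "cmod z = 1" by simp
    define t where "t = Arg2pi z / (2*pi)"
    have t: "0 \<le> t" "t \<le> 1" using Arg2pi_ge_0[of z] Arg2pi_lt_2pi[of z] by (auto simp: t_def)
    have "cis (2*pi*t) = exp (\<i> * complex_of_real (Arg2pi z))" by (simp add: t_def cis_conv_exp)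
    also have "\<dots> = z" using z complex_norm_eq_1_exp by blast
    finally show "z \<in> (\<lambda>t. cis (2*pi*t)) ` {0..1}" using t by (intro image_eqI[of _ _ t]) auto
  qed
qed

lemma uniq:
  fixes H :: "real \<Rightarrow> complex"
  assumes cont: "continuous_on {0..1} H" and per: "H 0 = H 1"
    and orth: "\<And>m::int. integral {0..1} (\<lambda>t. H t * cis (2*pi*real_of_int m*t)) = 0"
    and x: "x \<in> {0..1}"
  shows "H x = 0"
proof -
  define E where "E t = cis (2*pi*t)" for t
  define G where "G z = cnj (H (Arg2pi z / (2*pi)))" for z
  have Eimg: "E ` {0..1} = sphere 0 1" unfolding E_def by (rule cis_image)
  have Esph: "E t \<in> sphere 0 1" for t by (simp add: E_def)
  have GE: "G (E t) = cnj (H t)" if "t \<in> {0..1}" for t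
  proof (cases "t < 1")
    case True
    then show ?thesis using that by (simp add: G_def E_def Arg_cis)
  next
    case False
    then have t1: "t = 1" using that by simp
    have "Arg2pi 1 = 0" by (rule Arg2pi_unique[of 1]) auto
    then show ?thesis using per t1 by (simp add: G_def E_def)
  qed
  have contE: "continuous_on {0..1} E" unfolding E_def by (intro continuous_intros)
  have contG: "continuous_on (sphere 0 1) G"
    unfolding continuous_openin_preimage_eq
  proof (intro allI impI)
    fix V :: "complex set" assume V: "open V"
    define U where "U = sphere 0 1 \<inter> G -` V"
    have "{0..1} \<inter> E -` U = {0..1} \<inter> (\<lambda>t. cnj (H t)) -` V"
      using GE Esph by (auto simp: U_def)
    moreover have "openin (top_of_set {0..1}) ({0..1} \<inter> (\<lambda>t. cnj (H t)) -` V)"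
      using continuous_on_cnj[OF cont] V unfolding continuous_openin_preimage_eq by blast
    ultimately have "openin (top_of_set {0..1}) ({0..1} \<inter> E -` U)" by simp
    moreover have "U \<subseteq> sphere 0 1" by (auto simp: U_def)
    ultimately show "openin (top_of_set (sphere 0 1)) (sphere 0 1 \<inter> G -` V)"
      using Abstract_Topology_2.continuous_imp_quotient_map[OF contE Eimg compact_Icc, of U] by (simp add: U_def)
  qed
  have "compact (H ` {0..1})" by (intro compact_continuous_image cont compact_Icc)
  then obtain MH0 where "\<forall>y\<in>H ` {0..1}. norm y \<le> MH0" using compact_imp_bounded bounded_iff by metis
  then obtain MH where MH: "MH > 0" "\<And>t. t \<in> {0..1} \<Longrightarrow> norm (H t) \<le> MH"
    by (metis (no_types, lifting) gt_ex image_eqI le_less_trans less_eq_real_def max.cobounded1 max.cobounded2 order_trans)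
  define \<phi> where "\<phi> t = (norm (H t))^2" for t
  have contphi: "continuous_on {0..1} \<phi>" unfolding \<phi>_def by (intro continuous_intros cont)
  have iphi: "integral {0..1} (\<lambda>t. H t * cnj (H t)) = of_real (integral {0..1} \<phi>)"
  proof -
    have "(\<phi> has_integral integral {0..1} \<phi>) {0..1}"
      by (intro integrable_integral integrable_continuous_interval contphi)
    then have "((\<lambda>t. complex_of_real (\<phi> t)) has_integral of_real (integral {0..1} \<phi>)) {0..1}"
      by (rule has_integral_of_real)
    moreover have "(\<lambda>t. H t * cnj (H t)) = (\<lambda>t. complex_of_real (\<phi> t))"
      by (rule ext) (simp only: \<phi>_def complex_norm_square)
    ultimately show ?thesis by (simp add: integral_unique)
  qed
  have key: "\<bar>integral {0..1} \<phi>\<bar> \<le> MH * e" if e: "e > 0" for e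
  proof -
    obtain p where p: "polynomial_function p" "\<And>z. z \<in> sphere 0 1 \<Longrightarrow> norm (G z - p z) < e"
      using Stone_Weierstrass_polynomial_function[OF compact_sphere contG e] by blast
    have tpp: "(\<lambda>t. p (E t)) \<in> tp" unfolding E_def by (rule tp_poly[OF p(1)])
    have o: "continuous_on UNIV (\<lambda>t. p (E t))" "integral {0..1} (\<lambda>t. H t * p (E t)) = 0"
      using tp_orth[OF cont orth tpp] by auto
    have contpE: "continuous_on {0..1} (\<lambda>t. p (E t))" using o(1) by (rule continuous_on_subset) auto
    have i1: "(\<lambda>t. H t * (cnj (H t) - p (E t))) integrable_on {0..1}"
      by (intro integrable_continuous_interval continuous_intros cont contpE)
    have i2: "(\<lambda>t. H t * p (E t)) integrable_on {0..1}"
      by (intro integrable_continuous_interval continuous_intros cont contpE)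
    have "integral {0..1} (\<lambda>t. H t * cnj (H t)) =
          integral {0..1} (\<lambda>t. H t * (cnj (H t) - p (E t)) + H t * p (E t))"
      by (simp add: algebra_simps)
    also have "\<dots> = integral {0..1} (\<lambda>t. H t * (cnj (H t) - p (E t)))"
      using integral_add[OF i1 i2] o(2) by simp
    finally have eq: "integral {0..1} (\<lambda>t. H t * cnj (H t)) = integral {0..1} (\<lambda>t. H t * (cnj (H t) - p (E t)))" .
    have "norm (integral {0..1} (\<lambda>t. H t * (cnj (H t) - p (E t)))) \<le> (MH * e) * (1 - 0)"
    proof (rule integral_bound)
      show "continuous_on {0..1} (\<lambda>t. H t * (cnj (H t) - p (E t)))"
        by (intro continuous_intros cont contpE)
      fix t :: real assume t: "t \<in> {0..1}"
      have "norm (H t * (cnj (H t) - p (E t))) = norm (H t) * norm (G (E t) - p (E t))"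
        using GE[OF t] by (simp add: norm_mult)
      also have "\<dots> \<le> MH * e"
        using MH(2)[OF t] p(2)[OF Esph[of t]] MH(1) by (intro mult_mono) auto
      finally show "norm (H t * (cnj (H t) - p (E t))) \<le> MH * e" .
    qed simp
    then show ?thesis using eq iphi by (metis norm_of_real mult_1_right diff_zero)
  qed
  have I0: "integral {0..1} \<phi> = 0"
  proof (rule ccontr)
    assume ne: "integral {0..1} \<phi> \<noteq> 0"
    define e where "e = \<bar>integral {0..1} \<phi>\<bar> / (2 * MH)"
    have "e > 0" using ne MH by (simp add: e_def)
    from key[OF this] have "\<bar>integral {0..1} \<phi>\<bar> \<le> \<bar>integral {0..1} \<phi>\<bar> / 2"
      using MH by (simp add: e_def)
    then show False using ne by simp
  qed
  have "\<phi> x = 0"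
  proof (rule has_integral_0_cbox_imp_0[of 0 1 \<phi>])
    show "continuous_on (cbox 0 1) \<phi>" using contphi by simp
    show "\<And>x. x \<in> box 0 1 \<Longrightarrow> 0 \<le> \<phi> x" by (simp add: \<phi>_def)
    have "(\<phi> has_integral integral {0..1} \<phi>) {0..1}"
      by (intro integrable_integral integrable_continuous_interval contphi)
    then show "(\<phi> has_integral 0) (cbox 0 1)" using I0 by simp
    show "box (0::real) 1 \<noteq> {}" by simp
    show "x \<in> cbox 0 1" using x by simp
  qed
  then show ?thesis by (simp add: \<phi>_def)
qed



lemma int_cis_exp: "integral {0..1} (\<lambda>x. cis (2*pi*real_of_int j*x)) = (if j = 0 then 1 else 0)"
proof (cases "j = 0")
  case True then show ?thesis by simp
next
  case False
  define A where "A = \<i> * complex_of_real (2*pi*real_of_int j)"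
  have A0: "A \<noteq> 0" using False by (simp add: A_def)
  have ce: "cis (2*pi*real_of_int j*x) = exp (x *\<^sub>R A)" for x
    by (simp add: A_def cis_conv_exp scaleR_conv_of_real algebra_simps)
  have "((\<lambda>x. exp (x *\<^sub>R A) * A) has_integral (exp (1 *\<^sub>R A) - exp (0 *\<^sub>R A))) {0..1}"
    by (rule fundamental_theorem_of_calculus) (auto intro: exp_scaleR_has_vector_derivative_right)
  moreover have "exp (1 *\<^sub>R A) = 1"
  proof -
    have "exp (1 *\<^sub>R A) = cis (2*pi*real_of_int j*1)" by (simp only: ce)
    also have "\<dots> = 1" using cis_multiple_2pi[of "real_of_int j"] by simp
    finally show ?thesis .
  qed
  moreover have e0: "exp (0 *\<^sub>R A) = 1" by simp
  ultimately have "((\<lambda>x. exp (x *\<^sub>R A) * A) has_integral (1 - 1)) {0..1}" by (simp only:)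
  then have "integral {0..1} (\<lambda>x. exp (x *\<^sub>R A) * A) = 0" by (simp only: diff_self integral_unique)
  then have "integral {0..1} (\<lambda>x. exp (x *\<^sub>R A)) * A = 0" by (simp only: integral_mult_left)
  then have i0: "integral {0..1} (\<lambda>x. exp (x *\<^sub>R A)) = 0" using A0 by simp
  have "(\<lambda>x. cis (2*pi*real_of_int j*x)) = (\<lambda>x. exp (x *\<^sub>R A))" by (rule ext) (rule ce)
  then show ?thesis using False i0 by (simp only: if_False)
qed

lemma periodic_int:
  fixes g :: "real \<Rightarrow> 'a"
  assumes "\<And>y. g (y + 1) = g y"
  shows "g (y + real_of_int n) = g y"
proof -
  have nat: "g (y + real k) = g y" for y k
  proof (induction k)
    case (Suc k)
    have "g (y + real (Suc k)) = g ((y + real k) + 1)" by (simp add: algebra_simps)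
    also have "\<dots> = g (y + real k)" by (rule assms)
    also have "\<dots> = g y" by (rule Suc.IH)
    finally show ?case .
  qed simp
  show ?thesis
  proof (cases "n \<ge> 0")
    case True
    then have "n = int (nat n)" by simp
    then show ?thesis using nat[of y "nat n"] by (metis of_int_of_nat_eq)
  next
    case False
    define k where "k = nat (-n)"
    have k: "n = - int k" using False by (simp add: k_def)
    have "g y = g ((y - real k) + real k)" by simp
    also have "\<dots> = g (y - real k)" by (rule nat)
    finally show ?thesis using k by simp
  qed
qed

lemma fc_neg: "fourier_coeff f (-m) = cnj (fourier_coeff f m)"
proof -
  have "cnj (fourier_coeff f m) =
        integral {0..1} (\<lambda>x. cnj (complex_of_real (f x) * cis (- 2 * pi * real_of_int m * x)))"
    unfolding fourier_coeff_def by (rule integral_cnj)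
  also have "\<dots> = fourier_coeff f (-m)" unfolding fourier_coeff_def by (simp add: cis_cnj)
  finally show ?thesis by simp
qed

lemma nz_coeff:
  assumes per: "periodic1 f" and cont: "continuous_on UNIV f" and ntp: "\<not> trig_poly f"
  shows "\<exists>k>N. fourier_coeff f (int k) \<noteq> 0"
proof (rule ccontr)
  assume "\<not> (\<exists>k>N. fourier_coeff f (int k) \<noteq> 0)"
  then have z: "\<And>k. k > N \<Longrightarrow> fourier_coeff f (int k) = 0" by blast
  define a where "a = fourier_coeff f"
  have az: "a m = 0" if "m \<notin> {-int N..int N}" for m
  proof (cases "m \<ge> 0")
    case True
    define k where "k = nat m"
    have "m = int k" using True by (simp add: k_def)
    then show ?thesis using z[of k] that by (auto simp: a_def)
  next
    case False
    define k where "k = nat (-m)"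
    have k: "m = - int k" using False by (simp add: k_def)
    then have "k > N" using that False by auto
    then show ?thesis using z[of k] fc_neg[of f "int k"] k by (simp add: a_def)
  qed
  define P where "P x = (\<Sum>k\<in>{-int N..int N}. a k * cis (2 * pi * real_of_int k * x))" for x
  define H where "H x = complex_of_real (f x) - P x" for x
  have contP: "continuous_on S P" for S unfolding P_def by (intro continuous_intros)
  have contf: "continuous_on S (\<lambda>x. complex_of_real (f x))" for S
    by (intro continuous_intros continuous_on_subset[OF cont]) auto
  have contH: "continuous_on S H" for S unfolding H_def by (intro continuous_intros contP contf)
  have Hper: "H (y + 1) = H y" for y
  proof -
    have "f (y + 1) = f y" using per by (simp add: periodic1_def)
    moreover have "cis (2 * pi * real_of_int k * (y + 1)) = cis (2 * pi * real_of_int k * y)" for k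
    proof -
      have "cis (2 * pi * real_of_int k * (y + 1)) = cis (2 * pi * real_of_int k * y) * cis (2 * pi * real_of_int k)"
        by (simp add: cis_mult algebra_simps)
      then show ?thesis using cis_multiple_2pi[of "real_of_int k"] by simp
    qed
    ultimately show ?thesis by (simp add: H_def P_def)
  qed
  have orth: "integral {0..1} (\<lambda>t. H t * cis (2*pi*real_of_int m*t)) = 0" for m :: int
  proof -
    have i1: "(\<lambda>t. complex_of_real (f t) * cis (2*pi*real_of_int m*t)) integrable_on {0..1}"
      by (intro integrable_continuous_interval continuous_intros contf)
    have i2: "(\<lambda>t. a k * cis (2*pi*real_of_int k*t) * cis (2*pi*real_of_int m*t)) integrable_on {0..1}" for k
      by (intro integrable_continuous_interval continuous_intros)
    have i3: "(\<lambda>t. P t * cis (2*pi*real_of_int m*t)) integrable_on {0..1}"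
      by (intro integrable_continuous_interval continuous_intros contP)
    have e1: "integral {0..1} (\<lambda>t. complex_of_real (f t) * cis (2*pi*real_of_int m*t)) = a (-m)"
      by (simp add: a_def fourier_coeff_def)
    have "integral {0..1} (\<lambda>t. P t * cis (2*pi*real_of_int m*t)) =
          integral {0..1} (\<lambda>t. \<Sum>k\<in>{-int N..int N}. a k * cis (2*pi*real_of_int k*t) * cis (2*pi*real_of_int m*t))"
      by (simp add: P_def sum_distrib_right)
    also have "\<dots> = (\<Sum>k\<in>{-int N..int N}. integral {0..1} (\<lambda>t. a k * cis (2*pi*real_of_int k*t) * cis (2*pi*real_of_int m*t)))"
      by (rule integral_sum) (auto intro: i2)
    also have "\<dots> = (\<Sum>k\<in>{-int N..int N}. a k * (if k = -m then 1 else 0))"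
    proof (rule sum.cong[OF refl])
      fix k
      have "integral {0..1} (\<lambda>t. a k * cis (2*pi*real_of_int k*t) * cis (2*pi*real_of_int m*t)) =
            integral {0..1} (\<lambda>t. cis (2*pi*real_of_int (k+m)*t) * a k)"
        by (simp add: cis_mult algebra_simps)
      also have "\<dots> = integral {0..1} (\<lambda>t. cis (2*pi*real_of_int (k+m)*t)) * a k"
        by (rule integral_mult_left)
      also have "\<dots> = (if k + m = 0 then 1 else 0) * a k" by (simp only: int_cis_exp)
      also have "\<dots> = a k * (if k = -m then 1 else 0)" by (simp add: eq_neg_iff_add_eq_0)
      finally show "integral {0..1} (\<lambda>t. a k * cis (2*pi*real_of_int k*t) * cis (2*pi*real_of_int m*t)) =
            a k * (if k = -m then 1 else 0)" .
    qed
    also have "\<dots> = a (-m)"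
      using az[of "-m"] by (simp add: if_distrib[of "\<lambda>x. a _ * x"] sum.delta' cong: if_cong)
    finally have e2: "integral {0..1} (\<lambda>t. P t * cis (2*pi*real_of_int m*t)) = a (-m)" .
    have "integral {0..1} (\<lambda>t. H t * cis (2*pi*real_of_int m*t)) =
          integral {0..1} (\<lambda>t. complex_of_real (f t) * cis (2*pi*real_of_int m*t) - P t * cis (2*pi*real_of_int m*t))"
      by (simp add: H_def algebra_simps)
    also have "\<dots> = a (-m) - a (-m)" using integral_diff[OF i1 i3] e1 e2 by simp
    finally show ?thesis by simp
  qed
  have H0: "H x = 0" if "x \<in> {0..1}" for x
  proof (rule uniq[OF contH _ orth that])
    show "H 0 = H 1" using Hper[of 0] by simp
  qed
  have "H x = 0" for x
  proof -
    have "H x = H ((x - real_of_int \<lfloor>x\<rfloor>) + real_of_int \<lfloor>x\<rfloor>)" by simp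
    also have "\<dots> = H (x - real_of_int \<lfloor>x\<rfloor>)" by (rule periodic_int[where g=H, OF Hper])
    also have "\<dots> = 0"
    proof (rule H0)
      have "real_of_int \<lfloor>x\<rfloor> \<le> x" "x < real_of_int \<lfloor>x\<rfloor> + 1" by linarith+
      then show "x - real_of_int \<lfloor>x\<rfloor> \<in> {0..1}" unfolding atLeastAtMost_iff by linarith
    qed
    finally show ?thesis .
  qed
  then have "trig_poly f" unfolding trig_poly_def by (intro exI[of _ N] exI[of _ a]) (auto simp: H_def P_def)
  with ntp show False by simp
qed



definition Pz :: "(real \<Rightarrow> nat \<Rightarrow> real) \<Rightarrow> real \<Rightarrow> complex \<Rightarrow> complex" where
  "Pz c x z = (\<Sum>n. of_real (c x n) * (z - of_real x)^n)"

lemma cmod_of_real_diff: "cmod (complex_of_real a - of_real b) = \<bar>a - b\<bar>"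
  by (metis norm_of_real of_real_diff)

lemma dist_of_real_c: "dist (complex_of_real a) (of_real b) = \<bar>a - b\<bar>"
  by (simp add: dist_norm cmod_of_real_diff)

definition Fz :: "(real \<Rightarrow> real) \<Rightarrow> (real \<Rightarrow> nat \<Rightarrow> real) \<Rightarrow> complex \<Rightarrow> complex" where
  "Fz r c z = Pz c (SOME x. z \<in> ball (of_real x) (r x)) z"

definition Om :: "(real \<Rightarrow> real) \<Rightarrow> complex set" where
  "Om r = (\<Union>x. ball (complex_of_real x) (r x))"

locale ana =
  fixes f :: "real \<Rightarrow> real" and r :: "real \<Rightarrow> real" and c :: "real \<Rightarrow> nat \<Rightarrow> real"
  assumes rpos: "\<And>x. 0 < r x"
    and rsums: "\<And>x y. \<bar>y - x\<bar> < r x \<Longrightarrow> (\<lambda>n. c x n * (y-x)^n) sums f y"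
begin

lemma sums_P:
  assumes "z \<in> ball (of_real x) (r x)"
  shows "(\<lambda>n. of_real (c x n) * (z - of_real x)^n) sums Pz c x z"
proof -
  define d where "d = cmod (z - of_real x)"
  have d: "0 \<le> d" "d < r x" using assms by (auto simp: d_def dist_norm norm_minus_commute)
  define t where "t = (d + r x) / 2"
  have t: "d < t" "t < r x" using d by (auto simp: t_def)
  have "(\<lambda>n. c x n * ((x + t) - x)^n) sums f (x + t)" using t d by (intro rsums) auto
  then have "summable (\<lambda>n. c x n * t^n)" by (simp add: sums_summable)
  then have "summable (\<lambda>n. complex_of_real (c x n * t^n))"
    by (simp only: summable_complex_of_real)
  then have s1: "summable (\<lambda>n. of_real (c x n) * (of_real t :: complex)^n)" by simp
  have "summable (\<lambda>n. norm (of_real (c x n) * (z - of_real x)^n))"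
    by (rule powser_insidea[OF s1]) (use t d in \<open>simp add: d_def\<close>)
  then have "summable (\<lambda>n. of_real (c x n) * (z - of_real x)^n)"
    by (rule summable_norm_cancel)
  then show ?thesis unfolding Pz_def by (rule summable_sums)
qed

lemma hol_P: "Pz c x holomorphic_on ball (of_real x) (r x)"
  by (rule power_series_holomorphic[where a="\<lambda>n. of_real (c x n)"]) (rule sums_P)

lemma P_real:
  assumes "\<bar>t - x\<bar> < r x"
  shows "Pz c x (of_real t) = of_real (f t)"
proof -
  have "(\<lambda>n. complex_of_real (c x n * (t-x)^n)) sums of_real (f t)"
    using rsums[OF assms] by (rule sums_of_real)
  moreover have "(\<lambda>n. of_real (c x n) * (of_real t - of_real x)^n) sums Pz c x (of_real t)"
    by (rule sums_P) (use assms in \<open>simp add: dist_real_def abs_minus_commute\<close>)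
  ultimately show ?thesis by (simp add: sums_unique2)
qed

end

lemma real_zero_imp_zero:
  fixes h :: "complex \<Rightarrow> complex"
  assumes hol: "h holomorphic_on S" and S: "open S" "connected S"
    and xr: "complex_of_real xr \<in> S"
    and zero: "\<And>t. complex_of_real t \<in> S \<Longrightarrow> h (of_real t) = 0"
    and w: "w \<in> S"
  shows "h w = 0"
proof (rule analytic_continuation[OF hol S _ xr])
  show "{z \<in> S. z \<in> \<real>} \<subseteq> S" by auto
  show "\<And>z. z \<in> {z \<in> S. z \<in> \<real>} \<Longrightarrow> h z = 0" using zero by (auto elim!: Reals_cases)
  show "w \<in> S" by fact
  obtain e where e: "e > 0" "ball (of_real xr) e \<subseteq> S" using S xr open_contains_ball by blast
  show "of_real xr islimpt {z \<in> S. z \<in> \<real>}"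
    unfolding islimpt_approachable
  proof (intro allI impI)
    fix \<epsilon> :: real assume "\<epsilon> > 0"
    define s where "s = min e \<epsilon> / 2"
    have s: "0 < s" "s < e" "s < \<epsilon>" using e \<open>\<epsilon>>0\<close> by (auto simp: s_def)
    have ds: "dist (complex_of_real (xr + s)) (of_real xr) = s"
      using s by (subst dist_of_real_c) simp
    then have "complex_of_real (xr + s) \<in> ball (of_real xr) e" by (metis dist_commute mem_ball s(2))
    then show "\<exists>x'\<in>{z \<in> S. z \<in> \<real>}. x' \<noteq> of_real xr \<and> dist x' (of_real xr) < \<epsilon>"
    proof (intro bexI[of _ "of_real (xr + s)"] conjI)
      show "complex_of_real (xr + s) \<in> {z \<in> S. z \<in> \<real>}" using e \<open>of_real (xr + s) \<in> ball (of_real xr) e\<close> by auto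
      show "complex_of_real (xr + s) \<noteq> complex_of_real xr" using s by simp
      show "dist (complex_of_real (xr + s)) (complex_of_real xr) < \<epsilon>" using ds s by simp
    qed
  qed
qed

context ana begin

lemma P_consistent:
  assumes "z \<in> ball (of_real x) (r x)" "z \<in> ball (of_real x') (r x')"
  shows "Pz c x z = Pz c x' z"
proof -
  define S where "S = ball (complex_of_real x) (r x) \<inter> ball (of_real x') (r x')"
  have h1: "(\<lambda>w. Pz c x w - Pz c x' w) holomorphic_on S" unfolding S_def
    by (intro holomorphic_on_diff holomorphic_on_subset[OF hol_P]) auto
  have h2: "open S" "connected S" by (auto simp: S_def intro!: convex_connected convex_Int)
  have "\<bar>Re z - x\<bar> \<le> cmod (z - of_real x)" "\<bar>Re z - x'\<bar> \<le> cmod (z - of_real x')"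
    using abs_Re_le_cmod[of "z - of_real x"] abs_Re_le_cmod[of "z - of_real x'"] by auto
  then have h3: "complex_of_real (Re z) \<in> S" using assms
    by (auto simp: S_def dist_norm cmod_of_real_diff norm_minus_commute abs_minus_commute)
  have h4: "\<And>t. complex_of_real t \<in> S \<Longrightarrow> (\<lambda>w. Pz c x w - Pz c x' w) (complex_of_real t) = 0"
    by (auto simp: S_def dist_real_def P_real abs_minus_commute)
  have "z \<in> S" using assms by (auto simp: S_def)
  from real_zero_imp_zero[OF h1 h2 h3 h4 this] show ?thesis by simp
qed

lemma F_eq:
  assumes "z \<in> ball (of_real x) (r x)"
  shows "Fz r c z = Pz c x z"
proof -
  have "z \<in> ball (of_real (SOME x. z \<in> ball (of_real x) (r x))) (r (SOME x. z \<in> ball (of_real x) (r x)))"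
    by (rule someI[of _ x]) (rule assms)
  then show ?thesis unfolding Fz_def by (rule P_consistent[OF _ assms])
qed

lemma hol_F_ball: "Fz r c holomorphic_on ball (of_real x) (r x)"
  by (rule holomorphic_transform[OF hol_P]) (simp add: F_eq)

lemma open_Om: "open (Om r)" by (auto simp: Om_def)

lemma hol_F: "Fz r c holomorphic_on Om r"
  unfolding holomorphic_on_open[OF open_Om]
proof
  fix z assume "z \<in> Om r"
  then obtain x where x: "z \<in> ball (of_real x) (r x)" by (auto simp: Om_def)
  from hol_F_ball[of x] x show "\<exists>f'. (Fz r c has_field_derivative f') (at z)"
    by (simp add: holomorphic_on_open)
qed

lemma F_real: "Fz r c (of_real t) = of_real (f t)"
proof -
  have "complex_of_real t \<in> ball (of_real t) (r t)" using rpos by simp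
  then have "Fz r c (of_real t) = Pz c t (of_real t)" by (rule F_eq)
  also have "\<dots> = of_real (f t)" using rpos[of t] by (intro P_real) simp
  finally show ?thesis .
qed

lemma real_in_Om: "complex_of_real t \<in> Om r"
  using rpos[of t] unfolding Om_def by (intro UN_I[of t]) auto

lemma cont_F_real: "continuous_on UNIV (\<lambda>t. Fz r c (of_real t))"
  by (rule continuous_on_compose2[OF holomorphic_on_imp_continuous_on[OF hol_F] continuous_on_of_real])
     (auto simp: real_in_Om)

lemma cont_f: "continuous_on UNIV f"
proof -
  have "continuous_on UNIV (\<lambda>t. Re (Fz r c (of_real t)))"
    by (intro continuous_on_Re cont_F_real)
  then show ?thesis by (simp add: F_real)
qed

lemma strip: "\<exists>\<delta>>0. \<delta> \<le> 1 \<and> (\<forall>z. -1 \<le> Re z \<and> Re z \<le> 2 \<and> \<bar>Im z\<bar> < \<delta> \<longrightarrow> z \<in> Om r)"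
proof -
  have "compact (complex_of_real ` {-1..2})"
    by (intro compact_continuous_image continuous_on_of_real) auto
  moreover have "complex_of_real ` {-1..2} \<subseteq> Om r" using real_in_Om by auto
  ultimately obtain e where e: "e > 0" "(\<Union>x\<in>complex_of_real ` {-1..2}. ball x e) \<subseteq> Om r"
    by (rule compact_subset_open_imp_ball_epsilon_subset[OF _ open_Om])
  show ?thesis
  proof (intro exI[of _ "min e 1"] conjI allI impI)
    fix z :: complex assume z: "-1 \<le> Re z \<and> Re z \<le> 2 \<and> \<bar>Im z\<bar> < min e 1"
    have "dist (complex_of_real (Re z)) z = \<bar>Im z\<bar>"
      by (simp add: dist_norm cmod_def)
    then have "z \<in> ball (complex_of_real (Re z)) e" using z by simp
    moreover have "complex_of_real (Re z) \<in> complex_of_real ` {-1..2}" using z by auto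
    ultimately have "z \<in> (\<Union>x\<in>complex_of_real ` {-1..2}. ball x e)" by (rule UN_I[rotated])
    then show "z \<in> Om r" using e(2) by (rule subsetD[rotated])
  qed (use e in auto)
qed

lemma F_periodic:
  assumes per: "\<And>x. f (x+1) = f x"
    and \<delta>: "\<delta> > 0" "\<delta> \<le> 1" "\<forall>z. -1 \<le> Re z \<and> Re z \<le> 2 \<and> \<bar>Im z\<bar> < \<delta> \<longrightarrow> z \<in> Om r"
    and z: "z \<in> ball 0 \<delta>"
  shows "Fz r c (z + 1) = Fz r c z"
proof -
  have inb: "w \<in> Om r" "w + 1 \<in> Om r" if "w \<in> ball 0 \<delta>" for w
  proof -
    have "\<bar>Re w\<bar> < \<delta>" "\<bar>Im w\<bar> < \<delta>"
      using that abs_Re_le_cmod[of w] abs_Im_le_cmod[of w] by auto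
    then have "-1 \<le> Re w \<and> Re w \<le> 2 \<and> \<bar>Im w\<bar> < \<delta>" "-1 \<le> Re (w+1) \<and> Re (w+1) \<le> 2 \<and> \<bar>Im (w+1)\<bar> < \<delta>"
      using \<delta> by auto
    then show "w \<in> Om r" "w + 1 \<in> Om r" using \<delta>(3) by blast+
  qed
  have h1: "(\<lambda>w. Fz r c (w + 1) - Fz r c w) holomorphic_on ball 0 \<delta>"
  proof (intro holomorphic_on_diff)
    have "(Fz r c \<circ> (\<lambda>w. w + 1)) holomorphic_on ball 0 \<delta>"
    proof (rule holomorphic_on_compose)
      show "(\<lambda>w. w + 1) holomorphic_on ball 0 \<delta>" by (intro holomorphic_intros)
      have "(\<lambda>w. w + 1) ` ball 0 \<delta> \<subseteq> Om r" using inb by auto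
      then show "Fz r c holomorphic_on (\<lambda>w. w + 1) ` ball 0 \<delta>" by (rule holomorphic_on_subset[OF hol_F])
    qed
    then show "(\<lambda>w. Fz r c (w + 1)) holomorphic_on ball 0 \<delta>" by (simp add: o_def)
    show "Fz r c holomorphic_on ball 0 \<delta>" by (rule holomorphic_on_subset[OF hol_F]) (auto intro: inb)
  qed
  have h2: "open (ball (0::complex) \<delta>)" "connected (ball (0::complex) \<delta>)" by auto
  have h3: "complex_of_real 0 \<in> ball 0 \<delta>" using \<delta> by simp
  have h4: "(\<lambda>w. Fz r c (w + 1) - Fz r c w) (complex_of_real t) = 0" for t
  proof -
    have "Fz r c (of_real t + 1) = Fz r c (of_real (t + 1))" by simp
    also have "\<dots> = Fz r c (of_real t)" by (simp only: F_real per)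
    finally show ?thesis by simp
  qed
  from real_zero_imp_zero[OF h1 h2 h3 h4 z] show ?thesis by simp
qed



end

context ana begin


lemma decay:
  assumes per: "\<And>x. f (x+1) = f x"
  shows "\<exists>B \<eta>. \<eta> > 0 \<and> 0 \<le> B \<and> (\<forall>k::nat. norm (fourier_coeff f (int k)) \<le> B * exp (-(2*pi*real k*\<eta>)))"
proof -
  obtain \<delta> where \<delta>: "\<delta> > 0" "\<delta> \<le> 1" "\<forall>z. -1 \<le> Re z \<and> Re z \<le> 2 \<and> \<bar>Im z\<bar> < \<delta> \<longrightarrow> z \<in> Om r"
    using strip by blast
  define \<eta> where "\<eta> = \<delta> / 2"
  have \<eta>: "0 < \<eta>" "\<eta> < \<delta>" using \<delta> by (auto simp: \<eta>_def)
  define W where "W = {z. -1 < Re z} \<inter> {z. Re z < 2} \<inter> {z. Im z < \<delta>} \<inter> {z. Im z > -\<delta>}"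
  have Wsub: "W \<subseteq> Om r" using \<delta> by (auto simp: W_def)
  have Wconv: "convex W" unfolding W_def
    by (intro convex_Int convex_halfspace_Re_gt convex_halfspace_Re_lt convex_halfspace_Im_lt convex_halfspace_Im_gt)
  have holW: "Fz r c holomorphic_on W" by (rule holomorphic_on_subset[OF hol_F Wsub])
  define p2 where "p2 = 1 - \<i> * of_real \<eta>"
  define p3 where "p3 = - \<i> * of_real \<eta>"
  have pts: "0 \<in> W" "1 \<in> W" "p2 \<in> W" "p3 \<in> W" using \<delta> \<eta> by (auto simp: W_def p2_def p3_def)
  have segs: "closed_segment 0 1 \<subseteq> W" "closed_segment 1 p2 \<subseteq> W" "closed_segment p2 p3 \<subseteq> W"
     "closed_segment p3 0 \<subseteq> W"
    by (rule closed_segment_subset[OF _ _ Wconv]; rule pts)+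
  have "compact (Fz r c ` closed_segment p2 p3)"
    by (intro compact_continuous_image holomorphic_on_imp_continuous_on
        holomorphic_on_subset[OF holW segs(3)]) auto
  then have "bounded (Fz r c ` closed_segment p2 p3)" by (rule compact_imp_bounded)
  then obtain B0 where "\<forall>y\<in>Fz r c ` closed_segment p2 p3. norm y \<le> B0" unfolding bounded_iff by blast
  then have B0: "\<And>z. z \<in> closed_segment p2 p3 \<Longrightarrow> norm (Fz r c z) \<le> B0" by blast
  define B where "B = max B0 0"
  have Im_bot: "Im z = -\<eta>" if "z \<in> closed_segment p2 p3" for z
  proof -
    from that obtain u where u: "z = (1-u) *\<^sub>R p2 + u *\<^sub>R p3" by (auto simp: in_segment)
    have "Im ((1-u) *\<^sub>R p2 + u *\<^sub>R p3) = -\<eta>" by (simp add: p2_def p3_def algebra_simps)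
    then show ?thesis by (simp only: u)
  qed
  have seg03: "closed_segment 0 p3 \<subseteq> ball 0 \<delta>"
    using \<eta> by (intro closed_segment_subset) (auto simp: p3_def norm_mult)
  have bound: "norm (fourier_coeff f (int k)) \<le> B * exp (-(2*pi*real k*\<eta>))" for k :: nat
  proof -
    define w where "w = complex_of_real (2*pi*real k)"
    define g where "g z = Fz r c z * exp (-(\<i> * w * z))" for z
    have holg: "g holomorphic_on W" unfolding g_def by (intro holomorphic_intros holW)
    have contg: "continuous_on S g" if "S \<subseteq> W" for S
      by (rule holomorphic_on_imp_continuous_on[OF holomorphic_on_subset[OF holg that]])
    have ci: "(g has_contour_integral contour_integral (linepath a b) g) (linepath a b)"
      if "closed_segment a b \<subseteq> W" for a b
      by (intro has_contour_integral_integral contour_integrable_continuous_linepath contg that)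
    define I1 where "I1 = contour_integral (linepath 0 1) g"
    define I2 where "I2 = contour_integral (linepath 1 p2) g"
    define I3 where "I3 = contour_integral (linepath p2 p3) g"
    define I4 where "I4 = contour_integral (linepath p3 0) g"
    have c1: "(g has_contour_integral I1) (linepath 0 1)" unfolding I1_def by (rule ci[OF segs(1)])
    have c2: "(g has_contour_integral I2) (linepath 1 p2)" unfolding I2_def by (rule ci[OF segs(2)])
    have c3: "(g has_contour_integral I3) (linepath p2 p3)" unfolding I3_def by (rule ci[OF segs(3)])
    have c4: "(g has_contour_integral I4) (linepath p3 0)" unfolding I4_def by (rule ci[OF segs(4)])
    define \<gamma> where "\<gamma> = linepath 0 1 +++ (linepath 1 p2 +++ (linepath p2 p3 +++ linepath p3 0))"
    have "(g has_contour_integral (I1 + (I2 + (I3 + I4)))) \<gamma>"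
      unfolding \<gamma>_def
      by (intro has_contour_integral_join c1 c2 c3 c4) auto
    moreover have "(g has_contour_integral 0) \<gamma>"
    proof (rule Cauchy_theorem_convex_simple[OF holg Wconv])
      show "valid_path \<gamma>" by (simp add: \<gamma>_def)
      show "path_image \<gamma> \<subseteq> W" using segs by (simp add: \<gamma>_def path_image_join)
      show "pathfinish \<gamma> = pathstart \<gamma>" by (simp add: \<gamma>_def)
    qed
    ultimately have sum0: "I1 + (I2 + (I3 + I4)) = 0" by (rule has_contour_integral_unique)
    have top: "I1 = fourier_coeff f (int k)"
    proof -
      have "((\<lambda>x. g (linepath 0 1 x) * (1 - 0)) has_integral I1) {0..1}"
        using c1 by (simp only: has_contour_integral_linepath)
      moreover have "g (linepath 0 1 x) * (1 - 0) =
          complex_of_real (f x) * cis (- 2 * pi * real_of_int (int k) * x)" for x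
      proof -
        have "linepath 0 1 x = complex_of_real x" by (simp add: linepath_def scaleR_conv_of_real)
        moreover have "exp (-(\<i> * w * complex_of_real x)) = cis (- 2 * pi * real_of_int (int k) * x)"
          by (simp add: cis_conv_exp w_def algebra_simps)
        ultimately show ?thesis by (simp add: g_def F_real)
      qed
      ultimately have "((\<lambda>x. complex_of_real (f x) * cis (- 2 * pi * real_of_int (int k) * x)) has_integral I1) {0..1}"
        by simp
      then show ?thesis unfolding fourier_coeff_def by (simp add: integral_unique)
    qed
    have vert: "I2 + I4 = 0"
    proof -
      obtain I0 where c0: "(g has_contour_integral I0) (linepath 0 p3)"
        using ci[of 0 p3] segs(4) by (auto simp: closed_segment_commute)
      have "(g has_contour_integral (-I0)) (linepath p3 0)"
        using has_contour_integral_reversepath[OF valid_path_linepath c0] by simp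
      then have e4: "I4 = - I0" using c4 by (rule has_contour_integral_unique[symmetric])
      have int0: "((\<lambda>x. g (linepath 0 p3 x) * (p3 - 0)) has_integral I0) {0..1}"
        using c0 by (simp only: has_contour_integral_linepath)
      have eqpt: "g (linepath 1 p2 x) * (p2 - 1) = g (linepath 0 p3 x) * (p3 - 0)" if x: "x \<in> {0..1}" for x
      proof -
        define z where "z = linepath 0 p3 x"
        have "z \<in> closed_segment 0 p3" unfolding z_def by (rule linepath_in_path[OF x])
        then have zb: "z \<in> ball 0 \<delta>" using seg03 by blast
        have l1: "linepath 1 p2 x = z + 1" by (simp add: z_def linepath_def p2_def p3_def scaleR_conv_of_real algebra_simps)
        have ex: "exp (-(\<i> * w)) = 1"
        proof -
          have eq: "-(\<i> * w) = (2 * (- of_nat k) * complex_of_real pi) * \<i>" by (simp add: w_def algebra_simps)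
          show ?thesis unfolding eq using exp_integer_2pi[of "- of_nat k"] by simp
        qed
        have "-(\<i> * w * (z + 1)) = -(\<i> * w * z) + -(\<i> * w)" by (simp add: algebra_simps)
        then have "exp (-(\<i> * w * (z + 1))) = exp (-(\<i> * w * z))"
          by (simp only: exp_add ex mult_1_right)
        then have gz: "g (z + 1) = g z"
          using F_periodic[OF per \<delta> zb] unfolding g_def by (simp only:)
        have p: "p2 - 1 = p3 - 0" by (simp add: p2_def p3_def)
        have "g (linepath 1 p2 x) * (p2 - 1) = g (z + 1) * (p3 - 0)" by (simp only: l1 p)
        also have "\<dots> = g z * (p3 - 0)" by (simp only: gz)
        finally show ?thesis by (simp only: z_def)
      qed
      have "((\<lambda>x. g (linepath 1 p2 x) * (p2 - 1)) has_integral I0) {0..1} =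
            ((\<lambda>x. g (linepath 0 p3 x) * (p3 - 0)) has_integral I0) {0..1}"
        by (rule has_integral_cong) (rule eqpt)
      with int0 have "((\<lambda>x. g (linepath 1 p2 x) * (p2 - 1)) has_integral I0) {0..1}" by simp
      then have "(g has_contour_integral I0) (linepath 1 p2)" by (simp only: has_contour_integral_linepath)
      then have "I2 = I0" using c2 by (rule has_contour_integral_unique[symmetric])
      with e4 show ?thesis by simp
    qed
    have bot: "norm I3 \<le> B * exp (-(2*pi*real k*\<eta>))"
    proof -
      have "norm I3 \<le> (B * exp (-(2*pi*real k*\<eta>))) * norm (p3 - p2)"
      proof (rule has_contour_integral_bound_linepath[OF c3])
        show "0 \<le> B * exp (-(2*pi*real k*\<eta>))" by (simp add: B_def)
        fix z assume z: "z \<in> closed_segment p2 p3"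
        have "norm (g z) = norm (Fz r c z) * exp (Re (-(\<i> * w * z)))" by (simp add: g_def norm_mult)
        also have "Re (-(\<i> * w * z)) = -(2*pi*real k*\<eta>)" using Im_bot[OF z] by (simp add: w_def)
        also have "norm (Fz r c z) * exp (-(2*pi*real k*\<eta>)) \<le> B * exp (-(2*pi*real k*\<eta>))"
          using B0[OF z] by (intro mult_right_mono) (auto simp: B_def)
        finally show "norm (g z) \<le> B * exp (-(2*pi*real k*\<eta>))" .
      qed
      also have "norm (p3 - p2) = 1" by (simp add: p2_def p3_def)
      finally show ?thesis by simp
    qed
    have "I1 + I3 = I1 + (I2 + (I3 + I4)) - (I2 + I4)" by (simp add: algebra_simps)
    also have "\<dots> = 0" using sum0 vert by simp
    finally have "I1 = - I3" by (simp add: eq_neg_iff_add_eq_0)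
    then show ?thesis using top bot by simp
  qed
  show ?thesis using bound \<eta> by (intro exI[of _ B] exI[of _ \<eta>]) (auto simp: B_def)
qed

end

theorem lemma5p2:
  fixes f :: "real \<Rightarrow> real"
  assumes "periodic1 f"
    and "real_analytic f"
    and "\<not> trig_poly f"
  shows "\<exists>l :: nat \<Rightarrow> nat. strict_mono l \<and> (\<forall>k. l k > 0) \<and>
           (\<forall>M::real. eventually (\<lambda>k. M * T_sum f (l k) < norm (fourier_coeff f (int (l k)))) sequentially)"
proof -
  have "\<forall>x. \<exists>r. 0 < r \<and> (\<exists>c :: nat \<Rightarrow> real. \<forall>y. \<bar>y - x\<bar> < r \<longrightarrow> (\<lambda>n. c n * (y - x) ^ n) sums f y)"
    using assms(2) unfolding real_analytic_def by blast
  then obtain r where r: "\<And>x. 0 < r x \<and> (\<exists>c :: nat \<Rightarrow> real. \<forall>y. \<bar>y - x\<bar> < r x \<longrightarrow> (\<lambda>n. c n * (y - x) ^ n) sums f y)"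
    by (rule choice[THEN exE]) blast
  then have "\<forall>x. \<exists>c :: nat \<Rightarrow> real. \<forall>y. \<bar>y - x\<bar> < r x \<longrightarrow> (\<lambda>n. c n * (y - x) ^ n) sums f y" by blast
  then obtain c where c: "\<And>x. \<forall>y. \<bar>y - x\<bar> < r x \<longrightarrow> (\<lambda>n. c x n * (y - x) ^ n) sums f y"
    by (rule choice[THEN exE]) blast
  interpret ana f r c
    by unfold_locales (use r c in blast)+
  have per: "\<And>x. f (x+1) = f x" using assms(1) by (simp add: periodic1_def)
  obtain B \<eta> where B: "\<eta> > 0" "0 \<le> B" "\<And>k::nat. norm (fourier_coeff f (int k)) \<le> B * exp (-(2*pi*real k*\<eta>))"
    using decay[OF per] by blast
  define q where "q = exp (-(2*pi*\<eta>))"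
  have q: "0 < q" "q < 1" using B(1) by (auto simp: q_def)
  have dec: "norm (fourier_coeff f (int k)) \<le> B * q^k" for k
  proof -
    have "exp (-(2*pi*real k*\<eta>)) = exp (real k * (-(2*pi*\<eta>)))" by (simp add: algebra_simps)
    also have "\<dots> = q^k" by (simp only: q_def exp_of_nat_mult)
    finally show ?thesis using B(3)[of k] by simp
  qed
  have nz: "\<And>N. \<exists>k>N. norm (fourier_coeff f (int k)) \<noteq> 0"
    using nz_coeff[OF assms(1) cont_f assms(3)] by simp
  have Tdef: "\<And>n. T_sum f n = (\<Sum>j. norm (fourier_coeff f (int ((j+2)*n))) * real ((j+2)*n))"
    by (simp add: T_sum_def)
  have H: "\<And>M N. \<exists>n\<ge>N. n > 0 \<and> M * T_sum f n < norm (fourier_coeff f (int n)) \<and> 0 \<le> T_sum f n"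
    by (rule exists_good[where a="\<lambda>k. norm (fourier_coeff f (int k))", OF _ dec q nz Tdef]) simp
  show ?thesis by (rule build_seq[OF H])
qed

end
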